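(* For every $k\ge1$ and every $\ell\in\{1,\dots,12\}$, the string $t_\ell(k)$ is a Nyldon word.
   Context: Strings are over the binary alphabet $\{a,b\}$ ordered by $a \prec b$, and $\prec$ also denotes the induced lexicographic order on strings: $x \prec y$ iff $x$ is a proper prefix of $y$, or there is $i$ with $x[1..i-1]=y[1..i-1]$ and $x[i]\prec y[i]$; $x\preceq y$ means $x\prec y$ or $x=y$. Nyldon words are defined recursively: every string of length $1$ is a Nyldon word; a string $w$ with $|w|\ge 2$ is a Nyldon word iff there is no factorization $w=\gamma_1\cdots\gamma_m$ with $m\ge 2$, each $\gamma_i$ a nonempty Nyldon word, and $\gamma_1\preceq\gamma_2\preceq\cdots\preceq\gamma_m$. For a binary string $w$, $\overline{w}$ is obtained by exchanging $a$ and $b$ letterwise, and $w'$ is $w$ with its last letter removed; $\overline{w}'$ means $(\overline{w})'$. Thue–Morse words: $\mathit{TM}_0=a$ and $\mathit{TM}_k=\mathit{TM}_{k-1}\cdot\overline{\mathit{TM}_{k-1}}$ for $k\ge1$. For $k\ge1$ put $A=\mathit{TM}_{2k}$, $B=\overline{\mathit{TM}_{2k}}$ and define $t_1(k)=b\,A\,B'$, $t_2(k)=b\,A\,B$, $t_3(k)=b\,A\,B\,B'$, $t_4(k)=b\,A$, $t_5(k)=b\,A\,\mathit{TM}_{2k-1}\,\overline{\mathit{TM}_{2k-2}}'$, $t_6(k)=b\,A\,A\,B'$, $t_7(k)=b\,A\,A\,B$, $t_8(k)=b\,A\,A\,B\,B'$, $t_9(k)=b\,A\,B\,A\,A\,B'$,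 $t_{10}(k)=b\,A\,B\,A\,A\,B$, $t_{11}(k)=b\,A\,A\,B\,B\,A\,A\,B'$, $t_{12}(k)=b\,A\,B\,A\,A\,B\,B\,A\,A\,B'$. *)

theory Defs imports Main begin

datatype letter = La | Lb   (* the letters a and b, with a \<prec> b *)

type_synonym word = "letter list"

fun lex_less :: "word \<Rightarrow> word \<Rightarrow> bool" where
  "lex_less [] [] = False"
| "lex_less [] (y # ys) = True"
| "lex_less (x # xs) [] = False"
| "lex_less (x # xs) (y # ys) = ((x = La \<and> y = Lb) \<or> (x = y \<and> lex_less xs ys))"

definition lex_le :: "word \<Rightarrow> word \<Rightarrow> bool" where
  "lex_le x y \<longleftrightarrow> lex_less x y \<or> x = y"

fun nyldon_upto :: "nat \<Rightarrow> word set" where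
  "nyldon_upto 0 = {}"
| "nyldon_upto (Suc n) = nyldon_upto n \<union>
     {w. length w = Suc n \<and>
         (length w = 1 \<or>
          \<not> (\<exists>gs. length gs \<ge> 2 \<and> concat gs = w \<and>
                 (\<forall>g\<in>set gs. g \<noteq> [] \<and> g \<in> nyldon_upto n) \<and>
                 (\<forall>i. Suc i < length gs \<longrightarrow> lex_le (gs ! i) (gs ! Suc i))))}"

definition nyldon :: "word \<Rightarrow> bool" where
  "nyldon w \<longleftrightarrow> w \<in> nyldon_upto (length w)"

fun compl :: "letter \<Rightarrow> letter" where
  "compl La = Lb" | "compl Lb = La"

definition bar :: "word \<Rightarrow> word" where
  "bar w = map compl w"

primrec TM :: "nat \<Rightarrow> word" where
  "TM 0 = [La]"
| "TM (Suc k) = TM k @ bar (TM k)"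

abbreviation prm :: "word \<Rightarrow> word" where
  "prm w \<equiv> butlast w"

definition t :: "nat \<Rightarrow> nat \<Rightarrow> word" where
  "t l k = (let A = TM (2*k); B = bar (TM (2*k)) in
     if l = 1 then [Lb] @ A @ prm B
     else if l = 2 then [Lb] @ A @ B
     else if l = 3 then [Lb] @ A @ B @ prm B
     else if l = 4 then [Lb] @ A
     else if l = 5 then [Lb] @ A @ TM (2*k - 1) @ prm (bar (TM (2*k - 2)))
     else if l = 6 then [Lb] @ A @ A @ prm B
     else if l = 7 then [Lb] @ A @ A @ B
     else if l = 8 then [Lb] @ A @ A @ B @ prm B
     else if l = 9 then [Lb] @ A @ B @ A @ A @ prm B
     else if l = 10 then [Lb] @ A @ B @ A @ A @ B
     else if l = 11 then [Lb] @ A @ A @ B @ B @ A @ A @ prm B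
     else [Lb] @ A @ B @ A @ A @ B @ B @ A @ A @ prm B)"

end

theory Submission imports Defs begin

lemma lex_irrefl[simp]: "\<not> lex_less x x"
  by (induction x) auto

lemma lex_trans: "lex_less x y \<Longrightarrow> lex_less y z \<Longrightarrow> lex_less x z"
proof (induction x arbitrary: y z)
  case Nil then show ?case by (cases z) (cases y; auto)+
next
  case (Cons a x)
  then obtain b y' where y: "y = b # y'" by (cases y) auto
  with Cons obtain c z' where z: "z = c # z'" by (cases z) auto
  show ?case using Cons y z by (cases a; cases b; cases c) auto
qed

lemma lex_total: "x \<noteq> y \<Longrightarrow> lex_less x y \<or> lex_less y x"
proof (induction x arbitrary: y)
  case Nil then show ?case by (cases y) auto
next
  case (Cons a x)
  then show ?case by (cases y; auto; case_tac a; case_tac aa; auto)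
qed

lemma lex_asym: "lex_less x y \<Longrightarrow> \<not> lex_less y x"
  using lex_trans lex_irrefl by blast

lemma lex_Nil[simp]: "lex_less [] y \<longleftrightarrow> y \<noteq> []"
  by (cases y) auto

lemma lex_prefix[simp]: "lex_less x (x @ y) \<longleftrightarrow> y \<noteq> []"
  by (induction x) auto

lemma lex_cancel[simp]: "lex_less (c @ x) (c @ y) \<longleftrightarrow> lex_less x y"
  by (induction c) auto

lemma lex_le_trans: "lex_le x y \<Longrightarrow> lex_le y z \<Longrightarrow> lex_le x z"
  unfolding lex_le_def using lex_trans by blast

lemma lex_le_less_trans: "lex_le x y \<Longrightarrow> lex_less y z \<Longrightarrow> lex_less x z"
  unfolding lex_le_def using lex_trans by blast

lemma lex_less_le_trans: "lex_less x y \<Longrightarrow> lex_le y z \<Longrightarrow> lex_less x z"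
  unfolding lex_le_def using lex_trans by blast

lemma lex_not_less: "\<not> lex_less x y \<longleftrightarrow> lex_le y x"
  unfolding lex_le_def using lex_total lex_asym lex_irrefl by blast

lemma lex_split: "lex_less u v \<Longrightarrow> (\<exists>z. v = u @ z) \<or> (\<forall>x y. lex_less (u @ x) (v @ y))"
proof (induction u arbitrary: v)
  case Nil then show ?case by auto
next
  case (Cons a u)
  then obtain b v' where v: "v = b # v'" by (cases v) auto
  show ?case
  proof (cases "a = La \<and> b = Lb")
    case True then show ?thesis using v by auto
  next
    case False
    then have "a = b" "lex_less u v'" using Cons.prems v by auto
    then show ?thesis using Cons.IH v by auto
  qed
qed

lemma lex_gt_concat: "lex_less z p \<Longrightarrow> lex_less z (p @ q)"
proof -
  assume "lex_less z p"
  from lex_split[OF this] show ?thesis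
  proof
    assume "\<exists>r. p = z @ r"
    then obtain r where "p = z @ r" by auto
    with \<open>lex_less z p\<close> show ?thesis by auto
  next
    assume "\<forall>x y. lex_less (z @ x) (p @ y)"
    then show ?thesis by (metis append_Nil2)
  qed
qed

lemma lex_gt_self_concat: "lex_less z p \<Longrightarrow> lex_less z (p @ z)"
  by (rule lex_gt_concat)

lemma succ_nth: "(\<forall>i. Suc i < length gs \<longrightarrow> P (gs ! i) (gs ! Suc i)) \<longleftrightarrow> successively P gs"
proof (induction gs)
  case Nil then show ?case by simp
next
  case (Cons a gs)
  show ?case
  proof (cases gs)
    case Nil then show ?thesis by simp
  next
    case (Cons b hs)
    have "(\<forall>i. Suc i < length (a # gs) \<longrightarrow> P ((a # gs) ! i) ((a # gs) ! Suc i)) \<longleftrightarrow>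
          P a b \<and> (\<forall>i. Suc i < length gs \<longrightarrow> P (gs ! i) (gs ! Suc i))"
      using Cons apply auto
      apply (case_tac i) apply auto
      done
    then show ?thesis using Cons.IH Cons by simp
  qed
qed

definition fac :: "word list \<Rightarrow> word \<Rightarrow> bool" where
  "fac gs w \<longleftrightarrow> concat gs = w \<and> (\<forall>g\<in>set gs. nyldon g) \<and> successively lex_le gs"

lemma upto_len: "w \<in> nyldon_upto n \<Longrightarrow> w \<noteq> [] \<and> length w \<le> n"
  by (induction n) auto

lemma upto_iff: "w \<in> nyldon_upto n \<longleftrightarrow> w \<noteq> [] \<and> length w \<le> n \<and> nyldon w"
proof (induction n)
  case 0 then show ?case by (auto simp: nyldon_def)
next
  case (Suc n)
  show ?case
  proof (cases "length w = Suc n")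
    case True then show ?thesis by (auto simp: nyldon_def)
  next
    case False
    then have "w \<in> nyldon_upto (Suc n) \<longleftrightarrow> w \<in> nyldon_upto n" by auto
    then show ?thesis using Suc False by auto
  qed
qed

lemma nyldon_nonempty: "nyldon w \<Longrightarrow> w \<noteq> []"
  unfolding nyldon_def using upto_len by blast

lemma concat_len_lt:
  assumes "2 \<le> length gs" "\<forall>g\<in>set gs. g \<noteq> []" "g \<in> set gs"
  shows "length g < length (concat gs)"
proof -
  obtain as bs where gs: "gs = as @ g # bs" using assms(3) by (meson split_list)
  have "as @ bs \<noteq> []" using assms(1) gs by auto
  then obtain h where "h \<in> set (as @ bs)" by (metis last_in_set)
  then have "h \<noteq> []" using assms(2) gs by auto
  have "length (concat gs) = length (concat as) + length g + length (concat bs)" using gs by simp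
  moreover have "length (concat (as @ bs)) > 0"
    using \<open>h \<in> set (as @ bs)\<close> \<open>h \<noteq> []\<close> by (auto simp: concat_eq_Nil_conv)
  ultimately show ?thesis by simp
qed

lemma NY: "nyldon w \<longleftrightarrow> w \<noteq> [] \<and> (\<forall>gs. fac gs w \<longrightarrow> length gs < 2)"
proof (cases w)
  case Nil then show ?thesis using nyldon_nonempty by blast
next
  case (Cons c w')
  define n where "n = length w'"
  have lw: "length w = Suc n" using Cons n_def by simp
  have "nyldon w \<longleftrightarrow> w \<in> nyldon_upto (Suc n)" using lw by (simp add: nyldon_def)
  also have "\<dots> \<longleftrightarrow> (length w = 1 \<or>
          \<not> (\<exists>gs. length gs \<ge> 2 \<and> concat gs = w \<and>
                 (\<forall>g\<in>set gs. g \<noteq> [] \<and> g \<in> nyldon_upto n) \<and>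
                 (\<forall>i. Suc i < length gs \<longrightarrow> lex_le (gs ! i) (gs ! Suc i))))"
    using lw upto_len[of w n] by auto
  also have "\<dots> \<longleftrightarrow> \<not> (\<exists>gs. length gs \<ge> 2 \<and> fac gs w)"
  proof -
    have A: "(\<forall>g\<in>set gs. g \<noteq> [] \<and> g \<in> nyldon_upto n) \<longleftrightarrow> (\<forall>g\<in>set gs. nyldon g)"
      if "length gs \<ge> 2" "concat gs = w" for gs
    proof
      assume "\<forall>g\<in>set gs. g \<noteq> [] \<and> g \<in> nyldon_upto n"
      then show "\<forall>g\<in>set gs. nyldon g" using upto_iff by blast
    next
      assume H: "\<forall>g\<in>set gs. nyldon g"
      show "\<forall>g\<in>set gs. g \<noteq> [] \<and> g \<in> nyldon_upto n"
      proof
        fix g assume g: "g \<in> set gs"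
        have ne: "\<forall>g\<in>set gs. g \<noteq> []" using H nyldon_nonempty by blast
        have "length g < length w" using concat_len_lt[OF that(1) ne g] that(2) by simp
        then show "g \<noteq> [] \<and> g \<in> nyldon_upto n" using upto_iff H g ne lw by auto
      qed
    qed
    have B: "length w = 1 \<Longrightarrow> \<not> (\<exists>gs. length gs \<ge> 2 \<and> fac gs w)"
    proof
      assume l1: "length w = 1" and "\<exists>gs. length gs \<ge> 2 \<and> fac gs w"
      then obtain gs where gs: "length gs \<ge> 2" "fac gs w" by blast
      then have ne: "\<forall>g\<in>set gs. g \<noteq> []" using nyldon_nonempty unfolding fac_def by blast
      obtain g where "g \<in> set gs" using gs(1) by (cases gs) auto
      from concat_len_lt[OF gs(1) ne this] gs(2) l1 ne \<open>g \<in> set gs\<close> show False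
        unfolding fac_def by auto
    qed
    show ?thesis using A B unfolding fac_def succ_nth by metis
  qed
  finally show ?thesis using Cons by (metis list.distinct(1) not_less)
qed

lemma letter_nyldon: "nyldon [c]"
  unfolding nyldon_def by simp

lemma exists_fac: "\<exists>gs. fac gs w"
proof (induction "length w" arbitrary: w rule: less_induct)
  case less
  show ?case
  proof (cases "w = []")
    case True then show ?thesis by (intro exI[of _ "[]"]) (simp add: fac_def)
  next
    case False
    show ?thesis
    proof (cases "nyldon w")
      case True then show ?thesis by (intro exI[of _ "[w]"]) (simp add: fac_def)
    next
      case False
      then show ?thesis using \<open>w \<noteq> []\<close> NY by blast
    qed
  qed
qed

lemma fac_nonempty: "fac gs w \<Longrightarrow> w \<noteq> [] \<Longrightarrow> gs \<noteq> []"
  unfolding fac_def by auto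

lemma fac_ne_elems: "fac gs w \<Longrightarrow> g \<in> set gs \<Longrightarrow> g \<noteq> []"
  unfolding fac_def using nyldon_nonempty by blast

lemma not_nyldon_fac: "fac gs w \<Longrightarrow> 2 \<le> length gs \<Longrightarrow> \<not> nyldon w"
  using NY by fastforce

lemma nyldon_fac_single: "nyldon w \<Longrightarrow> fac gs w \<Longrightarrow> gs = [w]"
proof -
  assume "nyldon w" "fac gs w"
  then have "length gs < 2" "gs \<noteq> []" using NY fac_nonempty nyldon_nonempty by blast+
  then obtain g where "gs = [g]" by (cases gs) auto
  then show ?thesis using \<open>fac gs w\<close> by (simp add: fac_def)
qed

lemma fac_append:
  "fac as u \<Longrightarrow> fac bs v \<Longrightarrow> (as \<noteq> [] \<longrightarrow> bs \<noteq> [] \<longrightarrow> lex_le (last as) (hd bs)) \<Longrightarrow> fac (as @ bs) (u @ v)"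
  unfolding fac_def by (auto simp: successively_append_iff)

lemma fac_single: "nyldon w \<Longrightarrow> fac [w] w"
  by (simp add: fac_def)

lemma fac_last_nyldon: "fac gs w \<Longrightarrow> gs \<noteq> [] \<Longrightarrow> nyldon (last gs)"
  unfolding fac_def by auto

definition SUFB :: "nat \<Rightarrow> bool" where
  "SUFB n \<longleftrightarrow> (\<forall>w p s. length w < n \<longrightarrow> nyldon w \<longrightarrow> w = p @ s \<longrightarrow> p \<noteq> [] \<longrightarrow> nyldon s \<longrightarrow> lex_less s w)"

lemma SUFB_D: "SUFB n \<Longrightarrow> length w < n \<Longrightarrow> nyldon w \<Longrightarrow> w = p @ s \<Longrightarrow> p \<noteq> [] \<Longrightarrow> nyldon s \<Longrightarrow> lex_less s w"
  unfolding SUFB_def by blast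

lemma sfx_le: "SUFB n \<Longrightarrow> length f < n \<Longrightarrow> nyldon f \<Longrightarrow> f = q @ s \<Longrightarrow> nyldon s \<Longrightarrow> lex_le s f"
proof -
  assume a: "SUFB n" "length f < n" "nyldon f" "f = q @ s" "nyldon s"
  show ?thesis
  proof (cases "q = []")
    case True then show ?thesis using a by (simp add: lex_le_def)
  next
    case False then show ?thesis using SUFB_D[OF a(1,2,3,4) False a(5)] by (simp add: lex_le_def)
  qed
qed

lemma fac_Cons: "fac (f # rest) W \<Longrightarrow> fac rest (concat rest) \<and> nyldon f \<and> W = f @ concat rest \<and> (rest \<noteq> [] \<longrightarrow> lex_le f (hd rest))"
  unfolding fac_def by (auto simp: successively_Cons)

lemma last_split: "hs \<noteq> [] \<Longrightarrow> concat hs = concat (butlast hs) @ last hs"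
  by (induction hs) auto

lemma M:
  assumes S: "SUFB n" and "fac fs W" "fs \<noteq> []" "\<forall>f\<in>set fs. length f < n" "nyldon g" "W = q @ g"
  shows "\<exists>y. last fs = y @ g"
  using assms(2-6)
proof (induction fs arbitrary: W q)
  case Nil then show ?case by simp
next
  case (Cons f rest)
  note fc = fac_Cons[OF Cons.prems(1)]
  have fr: "fac rest (concat rest)" and nf: "nyldon f" and Wf: "W = f @ concat rest"
    and hr: "rest \<noteq> [] \<Longrightarrow> lex_le f (hd rest)" using fc by blast+
  have ng: "nyldon g" by (rule Cons.prems(4))
  have qg: "q @ g = f @ concat rest" using Cons.prems(5) Wf by (rule subst)
  have lens: "\<forall>f\<in>set rest. length f < n" using Cons.prems(3) by simp
  show ?case
  proof (cases "rest = []")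
    case True then have "q @ g = f" using qg by simp
    then show ?thesis using True by (intro exI[of _ q]) simp
  next
    case rne: False
    obtain us where us: "(q = f @ us \<and> us @ g = concat rest) \<or> (q @ us = f \<and> g = us @ concat rest)"
      using append_eq_append_conv2[of q g f "concat rest"] qg by blast
    then show ?thesis
    proof
      assume "q = f @ us \<and> us @ g = concat rest"
      then have "concat rest = us @ g" by simp
      from Cons.IH[OF fr rne lens ng this] have "\<exists>y. last rest = y @ g" .
      then show ?thesis using rne by simp
    next
      assume H: "q @ us = f \<and> g = us @ concat rest"
      show ?thesis
      proof (cases "us = []")
        case True
        then have "concat rest = [] @ g" using H by simp
        from Cons.IH[OF fr rne lens ng this] have "\<exists>y. last rest = y @ g" .
        then show ?thesis using rne by simp
      next
        case une: False
        show ?thesis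
        proof (cases "q = []")
          case True
          then have "g = concat (f # rest)" using H by simp
          then have "fac (f # rest) g" using Cons.prems(1) unfolding fac_def by simp
          moreover have "2 \<le> length (f # rest)" using rne by (cases rest) auto
          ultimately have "\<not> nyldon g" by (rule not_nyldon_fac)
          then show ?thesis using ng by simp
        next
          case qne: False
          obtain hs where hs: "fac hs us" using exists_fac by blast
          then have hne: "hs \<noteq> []" using une fac_nonempty by blast
          have lh: "nyldon (last hs)" using fac_last_nyldon[OF hs hne] .
          have cu: "concat hs = us" using hs unfolding fac_def by simp
          have fe: "f = (q @ concat (butlast hs)) @ last hs"
            using H last_split[OF hne] cu by simp
          have lf: "length f < n" using Cons.prems(3) by simp
          have "lex_less (last hs) f"
            using SUFB_D[OF S lf nf fe _ lh] qne by simp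
          then have "lex_le (last hs) (hd rest)" using lex_less_le_trans[OF _ hr[OF rne]] 
            unfolding lex_le_def by blast
          then have "fac (hs @ rest) (us @ concat rest)" using fac_append[OF hs fr] by simp
          then have "fac (hs @ rest) g" using H by simp
          moreover have "2 \<le> length (hs @ rest)" using hne rne by (cases hs; cases rest) auto
          ultimately have "\<not> nyldon g" by (rule not_nyldon_fac)
          then show ?thesis using ng by simp
        qed
      qed
    qed
  qed
qed
lemma split_concat:
  "concat gs = u @ v \<Longrightarrow> u \<noteq> [] \<Longrightarrow>
   \<exists>as g bs x y. gs = as @ g # bs \<and> g = x @ y \<and> u = concat as @ x \<and> v = y @ concat bs \<and> x \<noteq> []"
proof (induction gs arbitrary: u)
  case Nil then show ?case by simp
next
  case (Cons g gs)
  have e: "g @ concat gs = u @ v" using Cons.prems(1) by simp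
  obtain us where us: "(g = u @ us \<and> us @ concat gs = v) \<or> (g @ us = u \<and> concat gs = us @ v)"
    using append_eq_append_conv2[of g "concat gs" u v] e by blast
  then show ?case
  proof
    assume "g = u @ us \<and> us @ concat gs = v"
    then show ?thesis using Cons.prems(2)
      by (intro exI[of _ "[]"] exI[of _ g] exI[of _ gs] exI[of _ u] exI[of _ us]) simp
  next
    assume H: "g @ us = u \<and> concat gs = us @ v"
    show ?thesis
    proof (cases "us = []")
      case True
      then show ?thesis using H Cons.prems(2)
        by (intro exI[of _ "[]"] exI[of _ g] exI[of _ gs] exI[of _ u] exI[of _ "[]"]) simp
    next
      case False
      from Cons.IH[OF conjunct2[OF H] False] obtain as g' bs x y where
        r: "gs = as @ g' # bs" "g' = x @ y" "us = concat as @ x" "v = y @ concat bs" "x \<noteq> []" by blast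
      show ?thesis using r H
        by (intro exI[of _ "g # as"] exI[of _ g'] exI[of _ bs] exI[of _ x] exI[of _ y]) simp
    qed
  qed
qed

lemma fac_sublists:
  assumes "fac (as @ g # bs) w"
  shows "fac as (concat as)" "fac bs (concat bs)" "nyldon g"
    "as \<noteq> [] \<Longrightarrow> lex_le (last as) g" "bs \<noteq> [] \<Longrightarrow> lex_le g (hd bs)"
  using assms unfolding fac_def by (auto simp: successively_append_iff successively_Cons)

lemma len2: "xs \<noteq> [] \<Longrightarrow> ys \<noteq> [] \<Longrightarrow> 2 \<le> length (xs @ ys)"
  by (cases xs; cases ys) auto

lemma H_lemma:
  assumes S: "SUFB n" and nu: "nyldon u" and nv: "nyldon v" and vu: "lex_less v u"
    and cond: "\<forall>p s. u = p @ s \<longrightarrow> p \<noteq> [] \<longrightarrow> nyldon s \<longrightarrow> lex_le s v"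
    and len: "length (u @ v) \<le> n"
  shows "nyldon (u @ v)"
proof -
  have une: "u \<noteq> []" using nyldon_nonempty[OF nu] .
  have vne: "v \<noteq> []" using nyldon_nonempty[OF nv] .
  have "\<not> (2 \<le> length gs)" if fg: "fac gs (u @ v)" for gs
  proof
    assume l2: "2 \<le> length gs"
    have cg: "concat gs = u @ v" using fg unfolding fac_def by simp
    have gne: "\<forall>g\<in>set gs. g \<noteq> []" using fac_ne_elems[OF fg] by blast
    obtain as g bs x y where sp: "gs = as @ g # bs" "g = x @ y" "u = concat as @ x" "v = y @ concat bs" "x \<noteq> []"
      using split_concat[OF cg une] by blast
    have fg': "fac (as @ g # bs) (u @ v)" using fg sp(1) by simp
    note sub = fac_sublists[OF fg']
    have "length g < length (concat gs)" using concat_len_lt[OF l2 gne] sp(1) by simp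
    then have glen: "length g < n" using cg len by simp
    show False
    proof (cases "y = []")
      case True
      show False
      proof (cases "as = []")
        case False
        have "fac (as @ [g]) (concat as @ g)"
          using fac_append[OF sub(1) fac_single[OF sub(3)]] sub(4)[OF False] by simp
        then have "fac (as @ [g]) u" using sp True by simp
        then show False using not_nyldon_fac[OF _ len2[OF False]] nu by blast
      next
        case asn: True
        then have ug: "u = g" using sp True by simp
        have bsne: "bs \<noteq> []" using l2 sp(1) asn by auto
        have vb: "v = concat bs" using sp True by simp
        show False
        proof (cases "2 \<le> length bs")
          case True
          then show False using not_nyldon_fac[OF _ True] sub(2) vb nv by blast
        next
          case False
          then obtain h where "bs = [h]" using bsne by (cases bs; cases "tl bs") auto
          then have "lex_le u v" using sub(5) ug vb by simp
          then show False using vu lex_not_less by blast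
        qed
      qed
    next
      case yne: False
      show False
      proof (cases "bs = []")
        case False
        obtain hs where hs: "fac hs y" using exists_fac by blast
        then have hne: "hs \<noteq> []" using yne fac_nonempty by blast
        have lh: "nyldon (last hs)" using fac_last_nyldon[OF hs hne] .
        have cu: "concat hs = y" using hs unfolding fac_def by simp
        have ge: "g = (x @ concat (butlast hs)) @ last hs"
          using sp(2) last_split[OF hne] cu by simp
        have "lex_less (last hs) g" using SUFB_D[OF S glen sub(3) ge _ lh] sp(5) by simp
        then have "lex_le (last hs) (hd bs)" using lex_less_le_trans[OF _ sub(5)[OF False]]
          unfolding lex_le_def by blast
        then have "fac (hs @ bs) (y @ concat bs)" using fac_append[OF hs sub(2)] by simp
        then have "fac (hs @ bs) v" using sp by simp
        then show False using not_nyldon_fac[OF _ len2[OF hne False]] nv by blast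
      next
        case bsn: True
        have asne: "as \<noteq> []" using l2 sp(1) bsn by auto
        have vy: "v = y" using sp bsn by simp
        have cane: "concat as \<noteq> []"
        proof -
          have "hd as \<in> set gs" using asne sp(1) by simp
          then have "hd as \<noteq> []" using gne by blast
          then show ?thesis using asne by (cases as) auto
        qed
        obtain hs where hs: "fac hs x" using exists_fac by blast
        then have hne: "hs \<noteq> []" using sp(5) fac_nonempty by blast
        have lh: "nyldon (last hs)" using fac_last_nyldon[OF hs hne] .
        have cu: "concat hs = x" using hs unfolding fac_def by simp
        have ue: "u = (concat as @ concat (butlast hs)) @ last hs"
          using sp(3) last_split[OF hne] cu by simp
        have "lex_le (last hs) v" using cond ue cane lh by blast
        then have "fac (hs @ [v]) (x @ v)" using fac_append[OF hs fac_single[OF nv]] by simp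
        then have "fac (hs @ [v]) g" using sp(2) vy by simp
        then show False using not_nyldon_fac[OF _ len2[OF hne]] sub(3) by blast
      qed
    qed
  qed
  then show ?thesis using NY une by (simp add: not_le)
qed

definition pp :: "letter \<Rightarrow> word list \<Rightarrow> nat \<Rightarrow> word" where
  "pp x es i = x # concat (take i es)"

lemma fac_take: "fac es w \<Longrightarrow> fac (take i es) (concat (take i es))"
  unfolding fac_def by (metis append_take_drop_id in_set_takeD successively_append_iff)

lemma fac_drop: "fac es w \<Longrightarrow> fac (drop i es) (concat (drop i es))"
  unfolding fac_def by (metis append_take_drop_id in_set_dropD successively_append_iff)

lemma elem_len: "f \<in> set es \<Longrightarrow> length f \<le> length (concat es)"
  by (induction es) auto

lemma P_claim:
  assumes S: "SUFB n" and fe: "fac es w'" and len: "length (x # w') \<le> n"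
  shows "i \<le> length es \<Longrightarrow> (\<forall>j<i. lex_less (es!j) (pp x es j)) \<Longrightarrow> nyldon (pp x es i)"
proof (induction i)
  case 0 then show ?case by (simp add: pp_def letter_nyldon)
next
  case (Suc i)
  have il: "i < length es" using Suc.prems by simp
  have cw: "concat es = w'" using fe unfolding fac_def by simp
  have elen: "\<forall>f\<in>set es. length f < n" using elem_len cw len by fastforce
  have npi: "nyldon (pp x es i)" using Suc by simp
  have nei: "nyldon (es ! i)" using fe il unfolding fac_def by simp
  have lt: "lex_less (es ! i) (pp x es i)" using Suc.prems by simp
  have eq: "pp x es (Suc i) = pp x es i @ es ! i"
    using il by (simp add: pp_def take_Suc_conv_app_nth)
  have len2': "length (pp x es i @ es ! i) \<le> n"
  proof -
    have "length (concat (take (Suc i) es)) \<le> length (concat es)"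
      by (metis append_take_drop_id concat_append length_append le_add1)
    then show ?thesis using eq len cw by (simp add: pp_def)
  qed
  have cond: "\<forall>p s. pp x es i = p @ s \<longrightarrow> p \<noteq> [] \<longrightarrow> nyldon s \<longrightarrow> lex_le s (es ! i)"
  proof (intro allI impI)
    fix p s assume ps: "pp x es i = p @ s" "p \<noteq> []" "nyldon s"
    obtain p' where pe: "p = x # p'" "concat (take i es) = p' @ s"
      using ps unfolding pp_def by (cases p) auto
    have sne: "s \<noteq> []" using nyldon_nonempty[OF ps(3)] .
    have i0: "i \<noteq> 0"
    proof
      assume "i = 0" then have "p' @ s = []" using pe(2) by simp
      then show False using sne by simp
    qed
    have tne: "take i es \<noteq> []" using i0 il by (cases es) auto
    have "\<forall>f\<in>set (take i es). length f < n" using elen by (meson in_set_takeD)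
    from M[OF S fac_take[OF fe] tne this ps(3) pe(2)] obtain y where "last (take i es) = y @ s" by blast
    moreover have "last (take i es) = es ! (i - 1)" using tne i0 il by (simp add: last_conv_nth min_def)
    ultimately have ey: "es ! (i - 1) = y @ s" by simp
    have "length (es ! (i - 1)) < n" using elen il by simp
    moreover have "nyldon (es ! (i - 1))" using fe il unfolding fac_def by simp
    ultimately have "lex_le s (es ! (i - 1))" using sfx_le[OF S _ _ ey ps(3)] by blast
    moreover have "lex_le (es ! (i - 1)) (es ! i)"
    proof -
      have "successively lex_le es" using fe unfolding fac_def by simp
      then have "\<forall>j. Suc j < length es \<longrightarrow> lex_le (es ! j) (es ! Suc j)" using succ_nth by blast
      then show ?thesis using i0 il by (metis Suc_pred' not_gr_zero)
    qed
    ultimately show "lex_le s (es ! i)" using lex_le_trans by blast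
  qed
  show ?case using H_lemma[OF S npi nei lt cond len2'] eq by simp
qed

lemma prepend:
  assumes S: "SUFB n" and fe: "fac es w'" and ne: "es \<noteq> []" and len: "length (x # w') \<le> n"
  shows "\<exists>j \<le> length es. fac (pp x es j # drop j es) (x # w') \<and> (\<forall>i<j. lex_less (es!i) (pp x es i))"
proof (cases "\<forall>i<length es. lex_less (es!i) (pp x es i)")
  case True
  have "nyldon (pp x es (length es))" using P_claim[OF S fe len] True by simp
  moreover have "pp x es (length es) = x # w'" using fe unfolding pp_def fac_def by simp
  ultimately show ?thesis using True by (intro exI[of _ "length es"]) (simp add: fac_single)
next
  case False
  then have "\<exists>i. i < length es \<and> \<not> lex_less (es!i) (pp x es i)" by blast
  then obtain i0 where i0: "i0 < length es" "\<not> lex_less (es!i0) (pp x es i0)"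
    and mn: "\<forall>m<i0. \<not> (m < length es \<and> \<not> lex_less (es!m) (pp x es m))"
    using exists_least_iff[of "\<lambda>i. i < length es \<and> \<not> lex_less (es!i) (pp x es i)"] by blast
  have allb: "\<forall>m<i0. lex_less (es!m) (pp x es m)" using mn i0 by auto
  have np: "nyldon (pp x es i0)" using P_claim[OF S fe len] i0 allb by simp
  have le: "lex_le (pp x es i0) (hd (drop i0 es))" using i0 lex_not_less by (simp add: hd_drop_conv_nth)
  have dne: "drop i0 es \<noteq> []" using i0 by simp
  have "fac ([pp x es i0] @ drop i0 es) (pp x es i0 @ concat (drop i0 es))"
    using fac_append[OF fac_single[OF np] fac_drop[OF fe]] le by simp
  moreover have "pp x es i0 @ concat (drop i0 es) = x # w'"
    using fe unfolding pp_def fac_def by (metis append_Cons append_take_drop_id concat_append)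
  ultimately show ?thesis using allb i0 by (intro exI[of _ i0]) simp
qed

lemma C_lemma:
  assumes S: "SUFB n" and ns: "nyldon s"
  shows "length (q @ s) < n \<Longrightarrow> \<exists>es. fac es (q @ s) \<and> es \<noteq> [] \<and> (\<exists>y. last es = y @ s)"
proof (induction q)
  case Nil then show ?case using ns by (intro exI[of _ "[s]"]) (simp add: fac_single)
next
  case (Cons x q')
  then obtain es where es: "fac es (q' @ s)" "es \<noteq> []" "\<exists>y. last es = y @ s" by auto
  obtain y where y: "last es = y @ s" using es(3) by blast
  have "length (x # (q' @ s)) \<le> n" using Cons.prems by simp
  from prepend[OF S es(1) es(2) this] obtain j where
    j: "j \<le> length es" "fac (pp x es j # drop j es) (x # q' @ s)" by blast
  show ?case
  proof (cases "j < length es")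
    case True
    then have "last (pp x es j # drop j es) = last es" by simp
    then show ?thesis using j y by (intro exI[of _ "pp x es j # drop j es"]) simp
  next
    case False
    then have jl: "j = length es" using j by simp
    have "pp x es j = (x # q') @ s" using jl es(1) unfolding pp_def fac_def by simp
    then show ?thesis using j jl by (intro exI[of _ "pp x es j # drop j es"]) auto
  qed
qed

lemma SUF_step: assumes S: "SUFB n" shows "SUFB (Suc n)"
  unfolding SUFB_def
proof (intro allI impI)
  fix w p s assume a: "length w < Suc n" "nyldon w" "w = p @ s" "p \<noteq> []" "nyldon s"
  obtain x p' where p: "p = x # p'" using a(4) by (cases p) auto
  define w' where "w' = p' @ s"
  have we: "w = x # w'" using a(3) p w'_def by simp
  have lw': "length (p' @ s) < n" using a(1) we w'_def by simp
  from C_lemma[OF S a(5) lw'] obtain es y where es: "fac es w'" "es \<noteq> []" "last es = y @ s"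
    unfolding w'_def by blast
  have "length (x # w') \<le> n" using a(1) we by simp
  from prepend[OF S es(1) es(2) this] obtain j where
    j: "j \<le> length es" "fac (pp x es j # drop j es) (x # w')" "\<forall>i<j. lex_less (es!i) (pp x es i)" by blast
  have "pp x es j # drop j es = [x # w']" using nyldon_fac_single[OF _ j(2)] a(2) we by simp
  then have "drop j es = []" by simp
  then have jl: "j = length es" using j(1) by simp
  define m where "m = length es - 1"
  have ml: "m < j" using jl es(2) m_def by (cases es) auto
  have "lex_less (es!m) (pp x es m)" using j(3) ml by blast
  moreover have "es ! m = last es" using es(2) m_def by (simp add: last_conv_nth)
  moreover have "pp x es m = x # concat (butlast es)" unfolding pp_def m_def by (simp add: butlast_conv_take)
  ultimately have lt: "lex_less (last es) (x # concat (butlast es))" by simp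
  have "w = (x # concat (butlast es)) @ last es"
    using we es(1) last_split[OF es(2)] unfolding fac_def by simp
  then have lw: "lex_less (last es) w" using lex_gt_concat[OF lt] by simp
  have cw: "concat es = w'" using es(1) unfolding fac_def by simp
  have "length (last es) \<le> length w'" using elem_len[of "last es" es] es(2) cw by simp
  then have "length (last es) < n" using lw' w'_def by simp
  moreover have "nyldon (last es)" using fac_last_nyldon[OF es(1,2)] .
  ultimately have "lex_le s (last es)" using sfx_le[OF S _ _ es(3) a(5)] by blast
  then show "lex_less s w" using lex_le_less_trans lw by blast
qed

lemma SUFB_all: "SUFB n"
proof (induction n)
  case 0 then show ?case by (simp add: SUFB_def)
next
  case (Suc n) then show ?case by (rule SUF_step)
qed

theorem SUF: "nyldon w \<Longrightarrow> w = p @ s \<Longrightarrow> p \<noteq> [] \<Longrightarrow> nyldon s \<Longrightarrow> lex_less s w"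
  using SUFB_D[OF SUFB_all[of "Suc (length w)"]] by simp

theorem H_thm:
  assumes "nyldon u" "nyldon v" "lex_less v u"
    "\<forall>p s. u = p @ s \<longrightarrow> p \<noteq> [] \<longrightarrow> nyldon s \<longrightarrow> lex_le s v"
  shows "nyldon (u @ v)"
  using H_lemma[OF SUFB_all assms order_refl] .

definition Inv :: "word \<Rightarrow> word \<Rightarrow> bool" where
  "Inv w \<tau> \<longleftrightarrow> nyldon w \<and> (\<forall>p s. w = p @ s \<longrightarrow> p \<noteq> [] \<longrightarrow> nyldon s \<longrightarrow> lex_le s \<tau>)"

lemma Inv_letter: "Inv [c] \<tau>"
  unfolding Inv_def using letter_nyldon nyldon_nonempty
  by (metis Cons_eq_append_conv append_is_Nil_conv)

lemma Inv_mono: "Inv w \<tau> \<Longrightarrow> lex_le \<tau> \<tau>' \<Longrightarrow> Inv w \<tau>'"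
  unfolding Inv_def using lex_le_trans by blast

lemma STEP:
  assumes iu: "Inv u \<tau>" and nv: "nyldon v" and vu: "lex_less v u" and tv: "lex_le \<tau> v"
  shows "Inv (u @ v) v"
proof -
  have nu: "nyldon u" using iu unfolding Inv_def by simp
  have cu: "\<forall>p s. u = p @ s \<longrightarrow> p \<noteq> [] \<longrightarrow> nyldon s \<longrightarrow> lex_le s \<tau>" using iu unfolding Inv_def by simp
  have cu': "\<forall>p s. u = p @ s \<longrightarrow> p \<noteq> [] \<longrightarrow> nyldon s \<longrightarrow> lex_le s v" using cu tv lex_le_trans by blast
  have nuv: "nyldon (u @ v)" using H_thm[OF nu nv vu cu'] .
  have "lex_le s v" if ps: "u @ v = p @ s" "p \<noteq> []" "nyldon s" for p s
  proof -
    obtain us where us: "(u = p @ us \<and> us @ v = s) \<or> (u @ us = p \<and> v = us @ s)"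
      using append_eq_append_conv2[of u v p s] ps(1) by blast
    then show ?thesis
    proof
      assume H: "u = p @ us \<and> us @ v = s"
      show ?thesis
      proof (cases "us = []")
        case True then show ?thesis using H by (simp add: lex_le_def)
      next
        case False
        obtain hs where hs: "fac hs us" using exists_fac by blast
        then have hne: "hs \<noteq> []" using False fac_nonempty by blast
        have lh: "nyldon (last hs)" using fac_last_nyldon[OF hs hne] .
        have cc: "concat hs = us" using hs unfolding fac_def by simp
        have "u = (p @ concat (butlast hs)) @ last hs" using H last_split[OF hne] cc by simp
        then have "lex_le (last hs) v" using cu' ps(2) lh by blast
        then have "fac (hs @ [v]) (us @ v)" using fac_append[OF hs fac_single[OF nv]] by simp
        then have "\<not> nyldon (us @ v)" using not_nyldon_fac[OF _ len2[OF hne]] by blast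
        then show ?thesis using H ps(3) by simp
      qed
    next
      assume H: "u @ us = p \<and> v = us @ s"
      show ?thesis
      proof (cases "us = []")
        case True then show ?thesis using H by (simp add: lex_le_def)
      next
        case False then show ?thesis using SUF[OF nv _ False ps(3)] H by (simp add: lex_le_def)
      qed
    qed
  qed
  then show ?thesis using nuv unfolding Inv_def by blast
qed

lemma bar_Nil[simp]: "bar [] = []" by (simp add: bar_def)
lemma bar_Cons[simp]: "bar (c # x) = compl c # bar x" by (simp add: bar_def)
lemma bar_app[simp]: "bar (x @ y) = bar x @ bar y" by (simp add: bar_def)
lemma compl_compl[simp]: "compl (compl c) = c" by (cases c) auto
lemma bar_bar[simp]: "bar (bar x) = x" by (induction x) auto

lemma TM_hd: "\<exists>r. TM n = La # r"
  by (induction n) auto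

lemma TM_len: "length (TM n) = 2 ^ n"
  by (induction n) (auto simp: bar_def)

lemma TM_last: "last (TM n) = (if even n then La else Lb)"
proof (induction n)
  case 0 then show ?case by simp
next
  case (Suc n)
  have "TM n \<noteq> []" using TM_hd[of n] by auto
  then have "last (TM (Suc n)) = compl (last (TM n))"
    by (simp add: bar_def last_map)
  then show ?case using Suc by simp
qed

lemma TM_repr: assumes "k \<ge> 1" shows "\<exists>M. TM (2*k) = La # M @ [La]"
proof -
  obtain r where r: "TM (2*k) = La # r" using TM_hd by blast
  have "length (TM (2*k)) \<ge> 2"
  proof -
    have "(2::nat) ^ (2*k) \<ge> 2 ^ 1" using assms by (intro power_increasing) auto
    then show ?thesis by (simp add: TM_len)
  qed
  then have rne: "r \<noteq> []" using r by auto
  have "last (TM (2*k)) = La" using TM_last by simp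
  then have "last r = La" using r rne by simp
  then have "r = butlast r @ [La]" using rne by (metis append_butlast_last_id)
  then have "TM (2*k) = La # butlast r @ [La]" using r by (metis append_Cons)
  then show ?thesis by blast
qed

lemma TM_Suc2: "TM (2 * Suc k) = TM (2*k) @ bar (TM (2*k)) @ bar (TM (2*k)) @ TM (2*k)"
  by simp

lemma TM_odd: "TM (2 * Suc k - 1) = TM (2*k) @ bar (TM (2*k))"
proof -
  have "2 * Suc k - 1 = Suc (2*k)" by simp
  then show ?thesis by simp
qed

lemma TM_even2: "TM (2 * Suc k - 2) = TM (2*k)"
proof -
  have "2 * Suc k - 2 = 2*k" by simp
  then show ?thesis by simp
qed

definition tw :: "nat \<Rightarrow> word \<Rightarrow> word" where
  "tw l M = (let A = La # M @ [La]; B = Lb # bar M @ [Lb]; B' = Lb # bar M in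
     if l = 1 then [Lb] @ A @ B'
     else if l = 2 then [Lb] @ A @ B
     else if l = 3 then [Lb] @ A @ B @ B'
     else if l = 4 then [Lb] @ A
     else if l = 6 then [Lb] @ A @ A @ B'
     else if l = 7 then [Lb] @ A @ A @ B
     else if l = 8 then [Lb] @ A @ A @ B @ B'
     else if l = 9 then [Lb] @ A @ B @ A @ A @ B'
     else if l = 10 then [Lb] @ A @ B @ A @ A @ B
     else if l = 11 then [Lb] @ A @ A @ B @ B @ A @ A @ B'
     else [Lb] @ A @ B @ A @ A @ B @ B @ A @ A @ B')"

definition tw' :: "nat \<Rightarrow> word \<Rightarrow> word" where
  "tw' l M = (let A = La # M @ [La]; B = Lb # bar M @ [Lb]; B' = Lb # bar M;
      A2 = A @ B @ B @ A; B2 = B @ A @ A @ B; B2' = B @ A @ A @ B' in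
     if l = 1 then [Lb] @ A2 @ B2'
     else if l = 2 then [Lb] @ A2 @ B2
     else if l = 3 then [Lb] @ A2 @ B2 @ B2'
     else if l = 4 then [Lb] @ A2
     else if l = 5 then [Lb] @ A2 @ A @ B @ B'
     else if l = 6 then [Lb] @ A2 @ A2 @ B2'
     else if l = 7 then [Lb] @ A2 @ A2 @ B2
     else if l = 8 then [Lb] @ A2 @ A2 @ B2 @ B2'
     else if l = 9 then [Lb] @ A2 @ B2 @ A2 @ A2 @ B2'
     else if l = 10 then [Lb] @ A2 @ B2 @ A2 @ A2 @ B2
     else if l = 11 then [Lb] @ A2 @ A2 @ B2 @ B2 @ A2 @ A2 @ B2'
     else [Lb] @ A2 @ B2 @ A2 @ A2 @ B2 @ B2 @ A2 @ A2 @ B2')"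

lemma t_cur: "TM (2*k) = La # M @ [La] \<Longrightarrow> l \<noteq> 5 \<Longrightarrow> t l k = tw l M"
  unfolding t_def tw_def Let_def by (simp add: butlast_append)

lemma t_next: "TM (2*k) = La # M @ [La] \<Longrightarrow> t l (Suc k) = tw' l M"
  unfolding t_def tw'_def Let_def TM_Suc2 TM_odd TM_even2 by (simp add: butlast_append)

lemma Inv_ny: "Inv w \<tau> \<Longrightarrow> nyldon w" unfolding Inv_def by simp

lemmas TD = tw_def tw'_def Let_def

lemma step_lemma:
  assumes n3: "Inv (tw 3 M) (tw 4 M)" and n4: "nyldon (tw 4 M)" and n8: "nyldon (tw 8 M)"
    and n9: "nyldon (tw 9 M)" and n10: "nyldon (tw 10 M)" and n12: "nyldon (tw 12 M)"
  shows "(\<forall>l\<in>{1..12}. nyldon (tw' l M)) \<and> Inv (tw' 3 M) (tw' 4 M)"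
proof -
  have i1: "Inv (tw' 1 M) (tw 9 M)"
  proof -
    have "tw' 1 M = tw 3 M @ tw 9 M" by (simp add: TD)
    moreover have "Inv (tw 3 M @ tw 9 M) (tw 9 M)"
      by (rule STEP[OF n3 n9]) (simp_all add: TD lex_le_def)
    ultimately show ?thesis by simp
  qed
  have i2: "nyldon (tw' 2 M)"
  proof -
    have "tw' 2 M = tw 3 M @ tw 10 M" by (simp add: TD)
    moreover have "Inv (tw 3 M @ tw 10 M) (tw 10 M)"
      by (rule STEP[OF n3 n10]) (simp_all add: TD lex_le_def)
    ultimately show ?thesis using Inv_ny by simp
  qed
  have i3: "Inv (tw' 3 M) (tw' 4 M)"
  proof -
    have "tw' 3 M = tw 3 M @ tw 12 M" by (simp add: TD)
    moreover have "Inv (tw 3 M @ tw 12 M) (tw 12 M)"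
      by (rule STEP[OF n3 n12]) (simp_all add: TD lex_le_def)
    moreover have "lex_le (tw 12 M) (tw' 4 M)" by (simp add: TD lex_le_def)
    ultimately show ?thesis using Inv_mono by simp
  qed
  have i4: "nyldon (tw' 4 M)"
  proof -
    have "tw' 4 M = tw 3 M @ tw 4 M" by (simp add: TD)
    moreover have "Inv (tw 3 M @ tw 4 M) (tw 4 M)"
      by (rule STEP[OF n3 n4]) (simp_all add: TD lex_le_def)
    ultimately show ?thesis using Inv_ny by simp
  qed
  have i5: "Inv (tw' 5 M) (tw 8 M)"
  proof -
    have "tw' 5 M = tw 3 M @ tw 8 M" by (simp add: TD)
    moreover have "Inv (tw 3 M @ tw 8 M) (tw 8 M)"
      by (rule STEP[OF n3 n8]) (simp_all add: TD lex_le_def)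
    ultimately show ?thesis by simp
  qed
  have i6: "Inv (tw' 6 M) (tw 9 M)"
  proof -
    have "tw' 6 M = tw' 5 M @ tw 9 M" by (simp add: TD)
    moreover have "Inv (tw' 5 M @ tw 9 M) (tw 9 M)"
      by (rule STEP[OF i5 n9]) (simp_all add: TD lex_le_def)
    ultimately show ?thesis by simp
  qed
  have i7: "Inv (tw' 7 M) (tw 10 M)"
  proof -
    have "tw' 7 M = tw' 5 M @ tw 10 M" by (simp add: TD)
    moreover have "Inv (tw' 5 M @ tw 10 M) (tw 10 M)"
      by (rule STEP[OF i5 n10]) (simp_all add: TD lex_le_def)
    ultimately show ?thesis by simp
  qed
  have i8: "Inv (tw' 8 M) (tw 12 M)"
  proof -
    have "tw' 8 M = tw' 5 M @ tw 12 M" by (simp add: TD)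
    moreover have "Inv (tw' 5 M @ tw 12 M) (tw 12 M)"
      by (rule STEP[OF i5 n12]) (simp_all add: TD lex_le_def)
    ultimately show ?thesis by simp
  qed
  have i9: "nyldon (tw' 9 M)"
  proof -
    have "tw' 9 M = tw' 1 M @ tw' 6 M" by (simp add: TD)
    moreover have "Inv (tw' 1 M @ tw' 6 M) (tw' 6 M)"
      by (rule STEP[OF i1 Inv_ny[OF i6]]) (simp_all add: TD lex_le_def)
    ultimately show ?thesis using Inv_ny by simp
  qed
  have i10: "nyldon (tw' 10 M)"
  proof -
    have "tw' 10 M = tw' 1 M @ tw' 7 M" by (simp add: TD)
    moreover have "Inv (tw' 1 M @ tw' 7 M) (tw' 7 M)"
      by (rule STEP[OF i1 Inv_ny[OF i7]]) (simp_all add: TD lex_le_def)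
    ultimately show ?thesis using Inv_ny by simp
  qed
  have i11: "Inv (tw' 11 M) (tw' 6 M)"
  proof -
    have "tw' 11 M = tw' 8 M @ tw' 6 M" by (simp add: TD)
    moreover have "Inv (tw' 8 M @ tw' 6 M) (tw' 6 M)"
      by (rule STEP[OF i8 Inv_ny[OF i6]]) (simp_all add: TD lex_le_def)
    ultimately show ?thesis by simp
  qed
  have i12: "nyldon (tw' 12 M)"
  proof -
    have "tw' 12 M = tw' 1 M @ tw' 11 M" by (simp add: TD)
    moreover have "Inv (tw' 1 M @ tw' 11 M) (tw' 11 M)"
      by (rule STEP[OF i1 Inv_ny[OF i11]]) (simp_all add: TD lex_le_def)
    ultimately show ?thesis using Inv_ny by simp
  qed
  have "\<forall>l\<in>{1..12}. nyldon (tw' l M)"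
  proof
    fix l :: nat assume "l \<in> {1..12}"
    then have "l \<in> {1,2,3,4,5,6,7,8,9,10,11,12}" by (simp; presburger)
    then show "nyldon (tw' l M)"
      using Inv_ny[OF i1] i2 Inv_ny[OF i3] i4 Inv_ny[OF i5] Inv_ny[OF i6] Inv_ny[OF i7]
        Inv_ny[OF i8] i9 i10 Inv_ny[OF i11] i12 by auto
  qed
  then show ?thesis using i3 by simp
qed

lemma TM2: "TM 2 = [La,Lb,Lb,La]" by (simp add: numeral_2_eq_2 bar_def)

lemma inv_2: "Inv [Lb,La] [La]"
proof -
  have h0: "Inv [Lb] [La]" by (rule Inv_letter)
  have h1: "Inv [Lb,La] [La]" using STEP[OF h0 letter_nyldon] by (simp add: lex_le_def)
  then show ?thesis .
qed

lemma inv_3: "Inv [Lb,La,La] [La]"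
proof -
  have h0: "Inv [Lb] [La]" by (rule Inv_letter)
  have h1: "Inv [Lb,La] [La]" using STEP[OF h0 letter_nyldon] by (simp add: lex_le_def)
  have h2: "Inv [Lb,La,La] [La]" using STEP[OF h1 letter_nyldon] by (simp add: lex_le_def)
  then show ?thesis .
qed

lemma inv_4: "Inv [Lb,La,Lb,Lb,La,Lb,La,La] [Lb,La,La]"
proof -
  have h0: "Inv [Lb] [La]" by (rule Inv_letter)
  have h1: "Inv [Lb,La] [La]" using STEP[OF h0 letter_nyldon] by (simp add: lex_le_def)
  have h2: "Inv [Lb,La,Lb] [Lb]" using STEP[OF h1 letter_nyldon] by (simp add: lex_le_def)
  have h3: "Inv [Lb,La,Lb,Lb,La] [Lb,La]" using STEP[OF h2 Inv_ny[OF inv_2]] by (simp add: lex_le_def)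
  have h4: "Inv [Lb,La,Lb,Lb,La,Lb,La,La] [Lb,La,La]" using STEP[OF h3 Inv_ny[OF inv_3]] by (simp add: lex_le_def)
  then show ?thesis .
qed

lemma inv_5: "Inv [Lb,La,La,Lb] [Lb]"
proof -
  have h0: "Inv [Lb] [La]" by (rule Inv_letter)
  have h1: "Inv [Lb,La] [La]" using STEP[OF h0 letter_nyldon] by (simp add: lex_le_def)
  have h2: "Inv [Lb,La,La] [La]" using STEP[OF h1 letter_nyldon] by (simp add: lex_le_def)
  have h3: "Inv [Lb,La,La,Lb] [Lb]" using STEP[OF h2 letter_nyldon] by (simp add: lex_le_def)
  then show ?thesis .
qed

lemma inv_6: "Inv [Lb,La,Lb,Lb,La,Lb,La,La,Lb] [Lb,La,La,Lb]"
proof -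
  have h0: "Inv [Lb] [La]" by (rule Inv_letter)
  have h1: "Inv [Lb,La] [La]" using STEP[OF h0 letter_nyldon] by (simp add: lex_le_def)
  have h2: "Inv [Lb,La,Lb] [Lb]" using STEP[OF h1 letter_nyldon] by (simp add: lex_le_def)
  have h3: "Inv [Lb,La,Lb,Lb,La] [Lb,La]" using STEP[OF h2 Inv_ny[OF inv_2]] by (simp add: lex_le_def)
  have h4: "Inv [Lb,La,Lb,Lb,La,Lb,La,La,Lb] [Lb,La,La,Lb]" using STEP[OF h3 Inv_ny[OF inv_5]] by (simp add: lex_le_def)
  then show ?thesis .
qed

lemma inv_7: "Inv [Lb,La,La,Lb,Lb,La,La] [Lb,La,La]"
proof -
  have h0: "Inv [Lb] [La]" by (rule Inv_letter)
  have h1: "Inv [Lb,La] [La]" using STEP[OF h0 letter_nyldon] by (simp add: lex_le_def)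
  have h2: "Inv [Lb,La,La] [La]" using STEP[OF h1 letter_nyldon] by (simp add: lex_le_def)
  have h3: "Inv [Lb,La,La,Lb] [Lb]" using STEP[OF h2 letter_nyldon] by (simp add: lex_le_def)
  have h4: "Inv [Lb,La,La,Lb,Lb,La,La] [Lb,La,La]" using STEP[OF h3 Inv_ny[OF inv_3]] by (simp add: lex_le_def)
  then show ?thesis .
qed

lemma inv_8: "Inv [Lb,La,Lb,Lb,La,Lb,La,La,Lb,Lb,La,La] [Lb,La,La,Lb,Lb,La,La]"
proof -
  have h0: "Inv [Lb] [La]" by (rule Inv_letter)
  have h1: "Inv [Lb,La] [La]" using STEP[OF h0 letter_nyldon] by (simp add: lex_le_def)
  have h2: "Inv [Lb,La,Lb] [Lb]" using STEP[OF h1 letter_nyldon] by (simp add: lex_le_def)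
  have h3: "Inv [Lb,La,Lb,Lb,La] [Lb,La]" using STEP[OF h2 Inv_ny[OF inv_2]] by (simp add: lex_le_def)
  have h4: "Inv [Lb,La,Lb,Lb,La,Lb,La,La,Lb,Lb,La,La] [Lb,La,La,Lb,Lb,La,La]" using STEP[OF h3 Inv_ny[OF inv_7]] by (simp add: lex_le_def)
  then show ?thesis .
qed

lemma inv_9: "Inv [Lb,La,Lb,Lb,La] [Lb,La]"
proof -
  have h0: "Inv [Lb] [La]" by (rule Inv_letter)
  have h1: "Inv [Lb,La] [La]" using STEP[OF h0 letter_nyldon] by (simp add: lex_le_def)
  have h2: "Inv [Lb,La,Lb] [Lb]" using STEP[OF h1 letter_nyldon] by (simp add: lex_le_def)
  have h3: "Inv [Lb,La,Lb,Lb,La] [Lb,La]" using STEP[OF h2 Inv_ny[OF inv_2]] by (simp add: lex_le_def)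
  then show ?thesis .
qed

lemma inv_10: "Inv [Lb,La,Lb,Lb,La,La,Lb] [Lb,La,La,Lb]"
proof -
  have h0: "Inv [Lb] [La]" by (rule Inv_letter)
  have h1: "Inv [Lb,La] [La]" using STEP[OF h0 letter_nyldon] by (simp add: lex_le_def)
  have h2: "Inv [Lb,La,Lb] [Lb]" using STEP[OF h1 letter_nyldon] by (simp add: lex_le_def)
  have h3: "Inv [Lb,La,Lb,Lb,La,La,Lb] [Lb,La,La,Lb]" using STEP[OF h2 Inv_ny[OF inv_5]] by (simp add: lex_le_def)
  then show ?thesis .
qed

lemma inv_11: "Inv [Lb,La,La,Lb,Lb,La,Lb,La,La] [Lb,La,La]"
proof -
  have h0: "Inv [Lb] [La]" by (rule Inv_letter)
  have h1: "Inv [Lb,La] [La]" using STEP[OF h0 letter_nyldon] by (simp add: lex_le_def)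
  have h2: "Inv [Lb,La,La] [La]" using STEP[OF h1 letter_nyldon] by (simp add: lex_le_def)
  have h3: "Inv [Lb,La,La,Lb] [Lb]" using STEP[OF h2 letter_nyldon] by (simp add: lex_le_def)
  have h4: "Inv [Lb,La,La,Lb,Lb,La] [Lb,La]" using STEP[OF h3 Inv_ny[OF inv_2]] by (simp add: lex_le_def)
  have h5: "Inv [Lb,La,La,Lb,Lb,La,Lb,La,La] [Lb,La,La]" using STEP[OF h4 Inv_ny[OF inv_3]] by (simp add: lex_le_def)
  then show ?thesis .
qed

lemma inv_12: "Inv [Lb,La,Lb,Lb,La,La,Lb,Lb,La,Lb,La,La] [Lb,La,La,Lb,Lb,La,Lb,La,La]"
proof -
  have h0: "Inv [Lb] [La]" by (rule Inv_letter)
  have h1: "Inv [Lb,La] [La]" using STEP[OF h0 letter_nyldon] by (simp add: lex_le_def)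
  have h2: "Inv [Lb,La,Lb] [Lb]" using STEP[OF h1 letter_nyldon] by (simp add: lex_le_def)
  have h3: "Inv [Lb,La,Lb,Lb,La,La,Lb,Lb,La,Lb,La,La] [Lb,La,La,Lb,Lb,La,Lb,La,La]" using STEP[OF h2 Inv_ny[OF inv_11]] by (simp add: lex_le_def)
  then show ?thesis .
qed

lemma inv_13: "Inv [Lb,La,La,Lb,Lb,La,Lb,La,La,Lb] [Lb,La,La,Lb]"
proof -
  have h0: "Inv [Lb] [La]" by (rule Inv_letter)
  have h1: "Inv [Lb,La] [La]" using STEP[OF h0 letter_nyldon] by (simp add: lex_le_def)
  have h2: "Inv [Lb,La,La] [La]" using STEP[OF h1 letter_nyldon] by (simp add: lex_le_def)
  have h3: "Inv [Lb,La,La,Lb] [Lb]" using STEP[OF h2 letter_nyldon] by (simp add: lex_le_def)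
  have h4: "Inv [Lb,La,La,Lb,Lb,La] [Lb,La]" using STEP[OF h3 Inv_ny[OF inv_2]] by (simp add: lex_le_def)
  have h5: "Inv [Lb,La,La,Lb,Lb,La,Lb,La,La,Lb] [Lb,La,La,Lb]" using STEP[OF h4 Inv_ny[OF inv_5]] by (simp add: lex_le_def)
  then show ?thesis .
qed

lemma inv_14: "Inv [Lb,La,Lb,Lb,La,La,Lb,Lb,La,Lb,La,La,Lb] [Lb,La,La,Lb,Lb,La,Lb,La,La,Lb]"
proof -
  have h0: "Inv [Lb] [La]" by (rule Inv_letter)
  have h1: "Inv [Lb,La] [La]" using STEP[OF h0 letter_nyldon] by (simp add: lex_le_def)
  have h2: "Inv [Lb,La,Lb] [Lb]" using STEP[OF h1 letter_nyldon] by (simp add: lex_le_def)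
  have h3: "Inv [Lb,La,Lb,Lb,La,La,Lb,Lb,La,Lb,La,La,Lb] [Lb,La,La,Lb,Lb,La,Lb,La,La,Lb]" using STEP[OF h2 Inv_ny[OF inv_13]] by (simp add: lex_le_def)
  then show ?thesis .
qed

lemma inv_15: "Inv [Lb,La,La,Lb,Lb,La] [Lb,La]"
proof -
  have h0: "Inv [Lb] [La]" by (rule Inv_letter)
  have h1: "Inv [Lb,La] [La]" using STEP[OF h0 letter_nyldon] by (simp add: lex_le_def)
  have h2: "Inv [Lb,La,La] [La]" using STEP[OF h1 letter_nyldon] by (simp add: lex_le_def)
  have h3: "Inv [Lb,La,La,Lb] [Lb]" using STEP[OF h2 letter_nyldon] by (simp add: lex_le_def)
  have h4: "Inv [Lb,La,La,Lb,Lb,La] [Lb,La]" using STEP[OF h3 Inv_ny[OF inv_2]] by (simp add: lex_le_def)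
  then show ?thesis .
qed

lemma inv_16: "Inv [Lb,La,Lb,Lb,La,La,Lb,Lb,La,Lb,La,La,Lb,Lb,La,La] [Lb,La,La,Lb,Lb,La,La]"
proof -
  have h0: "Inv [Lb] [La]" by (rule Inv_letter)
  have h1: "Inv [Lb,La] [La]" using STEP[OF h0 letter_nyldon] by (simp add: lex_le_def)
  have h2: "Inv [Lb,La,Lb] [Lb]" using STEP[OF h1 letter_nyldon] by (simp add: lex_le_def)
  have h3: "Inv [Lb,La,Lb,Lb,La,La,Lb,Lb,La] [Lb,La,La,Lb,Lb,La]" using STEP[OF h2 Inv_ny[OF inv_15]] by (simp add: lex_le_def)
  have h4: "Inv [Lb,La,Lb,Lb,La,La,Lb,Lb,La,Lb,La,La,Lb,Lb,La,La] [Lb,La,La,Lb,Lb,La,La]" using STEP[OF h3 Inv_ny[OF inv_7]] by (simp add: lex_le_def)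
  then show ?thesis .
qed

lemma inv_17: "Inv [Lb,La,Lb,Lb,La,Lb,La,La,Lb,La,Lb,Lb,La,La,Lb,Lb,La,Lb,La,La] [Lb,La,Lb,Lb,La,La,Lb,Lb,La,Lb,La,La]"
proof -
  have h0: "Inv [Lb] [La]" by (rule Inv_letter)
  have h1: "Inv [Lb,La] [La]" using STEP[OF h0 letter_nyldon] by (simp add: lex_le_def)
  have h2: "Inv [Lb,La,Lb] [Lb]" using STEP[OF h1 letter_nyldon] by (simp add: lex_le_def)
  have h3: "Inv [Lb,La,Lb,Lb,La] [Lb,La]" using STEP[OF h2 Inv_ny[OF inv_2]] by (simp add: lex_le_def)
  have h4: "Inv [Lb,La,Lb,Lb,La,Lb,La,La] [Lb,La,La]" using STEP[OF h3 Inv_ny[OF inv_3]] by (simp add: lex_le_def)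
  have h5: "Inv [Lb,La,Lb,Lb,La,Lb,La,La,Lb,La,Lb,Lb,La,La,Lb,Lb,La,Lb,La,La] [Lb,La,Lb,Lb,La,La,Lb,Lb,La,Lb,La,La]" using STEP[OF h4 Inv_ny[OF inv_12]] by (simp add: lex_le_def)
  then show ?thesis .
qed

lemma inv_18: "Inv [Lb,La,Lb,Lb,La,Lb,La,La,Lb,La,Lb,Lb,La,La,Lb,Lb,La,Lb,La,La,Lb] [Lb,La,Lb,Lb,La,La,Lb,Lb,La,Lb,La,La,Lb]"
proof -
  have h0: "Inv [Lb] [La]" by (rule Inv_letter)
  have h1: "Inv [Lb,La] [La]" using STEP[OF h0 letter_nyldon] by (simp add: lex_le_def)
  have h2: "Inv [Lb,La,Lb] [Lb]" using STEP[OF h1 letter_nyldon] by (simp add: lex_le_def)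
  have h3: "Inv [Lb,La,Lb,Lb,La] [Lb,La]" using STEP[OF h2 Inv_ny[OF inv_2]] by (simp add: lex_le_def)
  have h4: "Inv [Lb,La,Lb,Lb,La,Lb,La,La] [Lb,La,La]" using STEP[OF h3 Inv_ny[OF inv_3]] by (simp add: lex_le_def)
  have h5: "Inv [Lb,La,Lb,Lb,La,Lb,La,La,Lb,La,Lb,Lb,La,La,Lb,Lb,La,Lb,La,La,Lb] [Lb,La,Lb,Lb,La,La,Lb,Lb,La,Lb,La,La,Lb]" using STEP[OF h4 Inv_ny[OF inv_14]] by (simp add: lex_le_def)
  then show ?thesis .
qed

lemma inv_19: "Inv [Lb,La,Lb,Lb,La,La,Lb,Lb,La,Lb,La,La,Lb,Lb,La,La,Lb,La,Lb,Lb,La,La,Lb,Lb,La,Lb,La,La] [Lb,La,Lb,Lb,La,La,Lb,Lb,La,Lb,La,La]"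
proof -
  have h0: "Inv [Lb] [La]" by (rule Inv_letter)
  have h1: "Inv [Lb,La] [La]" using STEP[OF h0 letter_nyldon] by (simp add: lex_le_def)
  have h2: "Inv [Lb,La,Lb] [Lb]" using STEP[OF h1 letter_nyldon] by (simp add: lex_le_def)
  have h3: "Inv [Lb,La,Lb,Lb,La,La,Lb,Lb,La] [Lb,La,La,Lb,Lb,La]" using STEP[OF h2 Inv_ny[OF inv_15]] by (simp add: lex_le_def)
  have h4: "Inv [Lb,La,Lb,Lb,La,La,Lb,Lb,La,Lb,La,La,Lb,Lb,La,La] [Lb,La,La,Lb,Lb,La,La]" using STEP[OF h3 Inv_ny[OF inv_7]] by (simp add: lex_le_def)
  have h5: "Inv [Lb,La,Lb,Lb,La,La,Lb,Lb,La,Lb,La,La,Lb,Lb,La,La,Lb,La,Lb,Lb,La,La,Lb,Lb,La,Lb,La,La] [Lb,La,Lb,Lb,La,La,Lb,Lb,La,Lb,La,La]" using STEP[OF h4 Inv_ny[OF inv_12]] by (simp add: lex_le_def)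
  then show ?thesis .
qed

lemma inv_20: "Inv [Lb,La,Lb,Lb,La,Lb,La,La,Lb,La,Lb,Lb,La,La,Lb,Lb,La,Lb,La,La,Lb,Lb,La,La,Lb,La,Lb,Lb,La,La,Lb,Lb,La,Lb,La,La] [Lb,La,Lb,Lb,La,La,Lb,Lb,La,Lb,La,La,Lb,Lb,La,La,Lb,La,Lb,Lb,La,La,Lb,Lb,La,Lb,La,La]"
proof -
  have h0: "Inv [Lb] [La]" by (rule Inv_letter)
  have h1: "Inv [Lb,La] [La]" using STEP[OF h0 letter_nyldon] by (simp add: lex_le_def)
  have h2: "Inv [Lb,La,Lb] [Lb]" using STEP[OF h1 letter_nyldon] by (simp add: lex_le_def)
  have h3: "Inv [Lb,La,Lb,Lb,La] [Lb,La]" using STEP[OF h2 Inv_ny[OF inv_2]] by (simp add: lex_le_def)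
  have h4: "Inv [Lb,La,Lb,Lb,La,Lb,La,La] [Lb,La,La]" using STEP[OF h3 Inv_ny[OF inv_3]] by (simp add: lex_le_def)
  have h5: "Inv [Lb,La,Lb,Lb,La,Lb,La,La,Lb,La,Lb,Lb,La,La,Lb,Lb,La,Lb,La,La,Lb,Lb,La,La,Lb,La,Lb,Lb,La,La,Lb,Lb,La,Lb,La,La] [Lb,La,Lb,Lb,La,La,Lb,Lb,La,Lb,La,La,Lb,Lb,La,La,Lb,La,Lb,Lb,La,La,Lb,Lb,La,Lb,La,La]" using STEP[OF h4 Inv_ny[OF inv_19]] by (simp add: lex_le_def)
  then show ?thesis .
qed

lemma base_ny: "nyldon (t l 1)" if "l \<in> {1..12}"
proof -
  have "l \<in> {1,2,3,4,5,6,7,8,9,10,11,12}" using that by (simp; presburger)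
  then show ?thesis
    using Inv_ny[OF inv_4] Inv_ny[OF inv_6] Inv_ny[OF inv_8] Inv_ny[OF inv_9] Inv_ny[OF inv_10] Inv_ny[OF inv_12] Inv_ny[OF inv_14] Inv_ny[OF inv_16] Inv_ny[OF inv_17] Inv_ny[OF inv_18] Inv_ny[OF inv_19] Inv_ny[OF inv_20]
    by (auto simp: t_def bar_def TM2 Let_def)
qed

lemma base_inv: "Inv (t 3 1) (t 4 1)"
proof -
  have "Inv [Lb,La,Lb,Lb,La,Lb,La,La,Lb,Lb,La,La] [Lb,La,Lb,Lb,La]" by (rule Inv_mono[OF inv_8]) (simp add: lex_le_def)
  then show ?thesis by (simp add: t_def bar_def TM2 Let_def)
qed

lemma Q_all: "k \<ge> 1 \<Longrightarrow> (\<forall>l\<in>{1..12}. nyldon (t l k)) \<and> Inv (t 3 k) (t 4 k)"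
proof (induction k rule: nat_induct_at_least)
  case base then show ?case using base_ny base_inv by blast
next
  case (Suc k)
  obtain M where M: "TM (2*k) = La # M @ [La]" using TM_repr[OF Suc.hyps] by blast
  have c: "t l k = tw l M" if "l \<noteq> 5" for l using t_cur[OF M that] .
  have "nyldon (tw l M)" if "l \<in> {4,8,9,10,12}" for l
  proof -
    have "l \<in> {1..12}" "l \<noteq> 5" using that by auto
    then have "nyldon (t l k)" using Suc.IH by blast
    then show ?thesis using c[of l] \<open>l \<noteq> 5\<close> by simp
  qed
  moreover have "Inv (tw 3 M) (tw 4 M)" using Suc.IH c[of 3] c[of 4] by simp
  ultimately have "(\<forall>l\<in>{1..12}. nyldon (tw' l M)) \<and> Inv (tw' 3 M) (tw' 4 M)"
    using step_lemma by simp
  then show ?case using t_next[OF M] by simp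
qed

theorem lemma9:
  fixes k l :: nat
  assumes "k \<ge> 1" and "l \<in> {1..12}"
  shows "nyldon (t l k)"
  using Q_all[OF assms(1)] assms(2) by blast

end
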